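(* For each $n\geq1$ and all real $\beta,J>0$, $$2(e^{2\beta J}-1)^{|V(\Gamma_n)|-1}e^{-\beta J|E(\Gamma_n)|}\,T_n\!\left(\frac{e^{2\beta J}+1}{e^{2\beta J}-1},e^{2\beta J}\right)=2^{\frac{3^n+3}{2}}\cosh(\beta J)^{3^n}\,\Phi_n(\tanh(\beta J)),$$ where $\Phi_n(z)=z^{3^n/2}\prod_{k=1}^n\phi_k(z)^{3^{n-k}}\,(\phi_{n+1}(z)-1)$ with $\phi_1(z)=\frac{z+1}{z^{1/2}}$, $\phi_2(z)=\frac{z^2+1}{z}$, $\phi_k=\phi_{k-1}^2-3\phi_{k-1}+4$ for $k\ge3$. (The right-hand side is the partition function $Z_n=\sum_{\sigma\in\{\pm1\}^{V(\Gamma_n)}}\exp(\beta J\sum_{\{i,j\}\in E(\Gamma_n)}\sigma_i\sigma_j)$ of the Ising model on $\Gamma_n$.)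
   Context: Graphs are finite; for a graph $G$ and spanning subgraph $A$ (vertex set $V(G)$, edge set $E(A)\subseteq E(G)$), $k(A)$ is its number of components, $r(A)=|V(G)|-k(A)$, $n(A)=|E(A)|-r(A)$, and the Tutte polynomial is $T(G;x,y)=\sum_A(x-1)^{r(G)-r(A)}(y-1)^{n(A)}$. Sierpiński graphs $\Gamma_n$ ($n\ge1$), each with three outmost vertices top, left, right: $\Gamma_1$ is the triangle $K_3$; $\Gamma_{n+1}$ is obtained from three disjoint copies $G_1,G_2,G_3$ of $\Gamma_n$ by identifying left$(G_1)$ with top$(G_2)$, right$(G_1)$ with top$(G_3)$, right$(G_2)$ with left$(G_3)$; its outmost vertices are top$(G_1)$, left$(G_2)$, right$(G_3)$. $|V(\Gamma_n)|=(3^n+3)/2$, $|E(\Gamma_n)|=3^n$, and $T_n(x,y)=T(\Gamma_n;x,y)$. *)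

theory Defs
  imports Complex_Main
begin

definition adj_rel :: "'v set set \<Rightarrow> ('v \<times> 'v) set" where
  "adj_rel A = {(u, v). {u, v} \<in> A}"

definition conn_rel :: "'v set \<Rightarrow> 'v set set \<Rightarrow> ('v \<times> 'v) set" where
  "conn_rel V A = {(u, v). u \<in> V \<and> v \<in> V \<and> (u, v) \<in> (adj_rel A)\<^sup>*}"

definition ncomp :: "'v set \<Rightarrow> 'v set set \<Rightarrow> nat" where
  "ncomp V A = card (V // conn_rel V A)"

definition grank :: "'v set \<Rightarrow> 'v set set \<Rightarrow> nat" where
  "grank V A = card V - ncomp V A"

definition gnullity :: "'v set \<Rightarrow> 'v set set \<Rightarrow> nat" where
  "gnullity V A = card A - grank V A"

definition tutte :: "'v set \<Rightarrow> 'v set set \<Rightarrow> real \<Rightarrow> real \<Rightarrow> real" where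
  "tutte V E x y = (\<Sum>A\<in>Pow E. (x - 1) ^ (grank V E - grank V A) * (y - 1) ^ gnullity V A)"

text \<open>Gamma_n has top (0, s), left (0, 0), right (s, 0) with s = 2^(n-1).
  Gamma_(n+1) is the union of three translated copies of Gamma_n: G1 shifted by (0,s),
  G2 unshifted, G3 shifted by (s,0); their corner points coincide exactly as in the
  identifications left(G1)=top(G2), right(G1)=top(G3), right(G2)=left(G3).\<close>

definition shiftp :: "int \<times> int \<Rightarrow> int \<times> int \<Rightarrow> int \<times> int" where
  "shiftp d p = (fst p + fst d, snd p + snd d)"

fun sier_V :: "nat \<Rightarrow> (int \<times> int) set" where
  "sier_V 0 = {}"
| "sier_V (Suc 0) = {(0, 1), (0, 0), (1, 0)}"
| "sier_V (Suc (Suc n)) =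
     (let s = (2::int) ^ n; V = sier_V (Suc n)
      in shiftp (0, s) ` V \<union> V \<union> shiftp (s, 0) ` V)"

fun sier_E :: "nat \<Rightarrow> (int \<times> int) set set" where
  "sier_E 0 = {}"
| "sier_E (Suc 0) = {{(0, 1), (0, 0)}, {(0, 1), (1, 0)}, {(0, 0), (1, 0)}}"
| "sier_E (Suc (Suc n)) =
     (let s = (2::int) ^ n; E = sier_E (Suc n)
      in (\<lambda>e. shiftp (0, s) ` e) ` E \<union> E \<union> (\<lambda>e. shiftp (s, 0) ` e) ` E)"

definition T_sier :: "nat \<Rightarrow> real \<Rightarrow> real \<Rightarrow> real" where
  "T_sier n x y = tutte (sier_V n) (sier_E n) x y"

fun phi :: "nat \<Rightarrow> real \<Rightarrow> real" where
  "phi 0 z = 0"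
| "phi (Suc 0) z = (z + 1) / sqrt z"
| "phi (Suc (Suc 0)) z = (z ^ 2 + 1) / z"
| "phi (Suc (Suc (Suc k))) z = (phi (Suc (Suc k)) z) ^ 2 - 3 * phi (Suc (Suc k)) z + 4"

definition Phi :: "nat \<Rightarrow> real \<Rightarrow> real" where
  "Phi n z = z powr (real (3 ^ n) / 2) * (\<Prod>k = 1..n. phi k z ^ (3 ^ (n - k))) * (phi (n + 1) z - 1)"

end

theory Submission
  imports Defs "HOL-Library.FuncSet"
begin


definition Col :: "'v set \<Rightarrow> ('v \<Rightarrow> bool) set" where
  "Col V = {\<sigma>. \<forall>x. x \<notin> V \<longrightarrow> \<sigma> x = False}"

definition cst :: "('v \<Rightarrow> bool) \<Rightarrow> 'v set \<Rightarrow> bool" where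
  "cst \<sigma> e = (\<forall>u\<in>e. \<forall>v\<in>e. \<sigma> u = \<sigma> v)"

definition good :: "'v set \<Rightarrow> 'v set set \<Rightarrow> ('v \<Rightarrow> bool) set" where
  "good V A = {\<sigma>\<in>Col V. \<forall>e\<in>A. cst \<sigma> e}"

definition edges_ok :: "'v set \<Rightarrow> 'v set set \<Rightarrow> bool" where
  "edges_ok V A = (\<forall>e\<in>A. \<exists>u v. e = {u, v} \<and> u \<in> V \<and> v \<in> V)"

lemma Col_bij: "bij_betw (\<lambda>S x. x \<in> S) (Pow V) (Col V)"
  unfolding bij_betw_def Col_def
proof
  show "inj_on (\<lambda>S x. x \<in> S) (Pow V)" by (auto simp: inj_on_def fun_eq_iff)
  show "(\<lambda>S x. x \<in> S) ` Pow V = {\<sigma>. \<forall>x. x \<notin> V \<longrightarrow> \<sigma> x = False}"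
  proof (auto)
    fix \<sigma> :: "'a \<Rightarrow> bool" assume h: "\<forall>x. x \<notin> V \<longrightarrow> \<not> \<sigma> x"
    show "\<sigma> \<in> (\<lambda>S x. x \<in> S) ` Pow V"
      by (rule image_eqI[of _ _ "{x. \<sigma> x}"]) (use h in auto)
  qed
qed

lemma card_Col: "finite V \<Longrightarrow> card (Col V) = 2 ^ card V"
  using bij_betw_same_card[OF Col_bij, of V] by (simp add: card_Pow)

lemma finite_Col: "finite V \<Longrightarrow> finite (Col V)"
  using bij_betw_finite[OF Col_bij, of V] by simp

lemma sym_adj: "sym (adj_rel A)"
  unfolding sym_def adj_rel_def by (auto simp: insert_commute)

lemma adj_sym_rtr: "(x, y) \<in> (adj_rel A)\<^sup>* \<Longrightarrow> (y, x) \<in> (adj_rel A)\<^sup>*"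
  using sym_adj sym_rtrancl by (metis symD)

lemma conn_equiv: "equiv V (conn_rel V A)"
  unfolding equiv_def refl_on_def sym_def trans_def conn_rel_def
  by (auto intro: adj_sym_rtr rtrancl_trans)

lemma good_const:
  assumes "\<sigma> \<in> good V A" "(x, y) \<in> (adj_rel A)\<^sup>*"
  shows "\<sigma> x = \<sigma> y"
  using assms(2)
proof (induction rule: rtrancl_induct)
  case base then show ?case by simp
next
  case (step y z)
  then have "{y, z} \<in> A" by (simp add: adj_rel_def)
  with assms(1) have "cst \<sigma> {y, z}" by (auto simp: good_def)
  then have "\<sigma> y = \<sigma> z" unfolding cst_def by blast
  with step.IH show ?case by simp
qed

lemma good_sub_Col: "good V A \<subseteq> Col V" by (auto simp: good_def)

lemma card_good:
  assumes fin: "finite V" and ok: "edges_ok V A"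
  shows "card (good V A) = 2 ^ ncomp V A"
proof -
  define R where "R = conn_rel V A"
  have eq: "equiv V R" unfolding R_def by (rule conn_equiv)
  define Q where "Q = V // R"
  have finQ: "finite Q" unfolding Q_def using fin eq by (auto intro: finite_quotient simp: equiv_def refl_on_def)
  define g where "g = (\<lambda>h x. if x \<in> V then h (R `` {x}) else False)"
  have "bij_betw g (PiE Q (\<lambda>_. UNIV)) (good V A)"
    unfolding bij_betw_def
  proof
    show "inj_on g (PiE Q (\<lambda>_. UNIV))"
    proof (rule inj_onI)
      fix h1 h2 assume h1: "h1 \<in> PiE Q (\<lambda>_. UNIV)" and h2: "h2 \<in> PiE Q (\<lambda>_. UNIV)"
        and e: "g h1 = g h2"
      show "h1 = h2"
      proof (rule PiE_ext[OF h1 h2])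
        fix C assume "C \<in> Q"
        then obtain x where x: "x \<in> V" "C = R `` {x}" unfolding Q_def by (rule quotientE)
        have "g h1 x = g h2 x" using e by simp
        then show "h1 C = h2 C" using x by (simp add: g_def)
      qed
    qed
    show "g ` PiE Q (\<lambda>_. UNIV) = good V A"
    proof
      show "g ` PiE Q (\<lambda>_. UNIV) \<subseteq> good V A"
      proof
        fix \<sigma> assume "\<sigma> \<in> g ` PiE Q (\<lambda>_. UNIV)"
        then obtain h where \<sigma>: "\<sigma> = g h" by auto
        have "\<sigma> \<in> Col V" unfolding \<sigma> g_def Col_def by auto
        moreover have "cst \<sigma> e" if "e \<in> A" for e
        proof -
          from ok that obtain u v where uv: "e = {u, v}" "u \<in> V" "v \<in> V"
            unfolding edges_ok_def by blast
          have "(u, v) \<in> adj_rel A" using that uv by (simp add: adj_rel_def)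
          then have "(u, v) \<in> R" using uv unfolding R_def conn_rel_def by auto
          then have "R `` {u} = R `` {v}" using eq by (simp add: equiv_class_eq)
          then show ?thesis using uv unfolding \<sigma> g_def cst_def by auto
        qed
        ultimately show "\<sigma> \<in> good V A" by (simp add: good_def)
      qed
      show "good V A \<subseteq> g ` PiE Q (\<lambda>_. UNIV)"
      proof
        fix \<sigma> assume \<sigma>: "\<sigma> \<in> good V A"
        define h where "h = restrict (\<lambda>C. \<sigma> (SOME x. x \<in> C)) Q"
        have hP: "h \<in> PiE Q (\<lambda>_. UNIV)" unfolding h_def by simp
        have "g h = \<sigma>"
        proof
          fix x show "g h x = \<sigma> x"
          proof (cases "x \<in> V")
            case True
            have inQ: "R `` {x} \<in> Q" unfolding Q_def using True by (rule quotientI)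
            have xin: "x \<in> R `` {x}" by (rule equiv_class_self[OF eq True])
            then have s: "(SOME y. y \<in> R `` {x}) \<in> R `` {x}" by (rule someI)
            then have "(x, SOME y. y \<in> R `` {x}) \<in> (adj_rel A)\<^sup>*"
              unfolding R_def conn_rel_def by auto
            then have "\<sigma> x = \<sigma> (SOME y. y \<in> R `` {x})" by (rule good_const[OF \<sigma>])
            then show ?thesis using True inQ by (simp add: g_def h_def)
          next
            case False
            then show ?thesis using \<sigma> by (simp add: g_def good_def Col_def)
          qed
        qed
        then show "\<sigma> \<in> g ` PiE Q (\<lambda>_. UNIV)" using hP by blast
      qed
    qed
  qed
  then have "card (good V A) = card (PiE Q (\<lambda>_. UNIV :: bool set))"
    by (simp add: bij_betw_same_card)
  also have "\<dots> = 2 ^ card Q" using finQ by (simp add: card_PiE)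
  finally show ?thesis unfolding Q_def R_def ncomp_def .
qed




lemma ncomp_le: assumes "finite V" "edges_ok V A" shows "ncomp V A \<le> card V"
proof -
  have "card (good V A) \<le> card (Col V)"
    by (rule card_mono[OF finite_Col[OF assms(1)] good_sub_Col])
  then have "(2::nat) ^ ncomp V A \<le> 2 ^ card V"
    using card_good[OF assms] card_Col[OF assms(1)] by simp
  then show ?thesis by simp
qed

lemma good_anti: "A \<subseteq> B \<Longrightarrow> good V B \<subseteq> good V A"
  by (auto simp: good_def)

lemma ncomp_anti:
  assumes "finite V" "edges_ok V B" "A \<subseteq> B"
  shows "ncomp V B \<le> ncomp V A"
proof -
  have okA: "edges_ok V A" using assms unfolding edges_ok_def by blast
  have "card (good V B) \<le> card (good V A)"
    by (rule card_mono[OF finite_subset[OF good_sub_Col finite_Col[OF assms(1)]] good_anti[OF assms(3)]])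
  then have "(2::nat) ^ ncomp V B \<le> 2 ^ ncomp V A"
    using card_good[OF assms(1,2)] card_good[OF assms(1) okA] by simp
  then show ?thesis by simp
qed

lemma ncomp_empty: assumes "finite V" shows "ncomp V {} = card V"
proof -
  have "good V {} = Col V" by (simp add: good_def)
  then have "(2::nat) ^ ncomp V {} = 2 ^ card V"
    using card_good[OF assms, of "{}"] card_Col[OF assms] by (simp add: edges_ok_def)
  then show ?thesis by simp
qed

lemma reach_in_V:
  assumes "(u, x) \<in> (adj_rel A)\<^sup>*" "u \<in> V" "edges_ok V A"
  shows "x \<in> V"
  using assms(1)
proof (induction rule: rtrancl_induct)
  case base then show ?case using assms(2) .
next
  case (step y z)
  then have "{y, z} \<in> A" by (simp add: adj_rel_def)
  with assms(3) obtain a b where "{y, z} = {a, b}" "a \<in> V" "b \<in> V" unfolding edges_ok_def by blast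
  then show ?case by (auto simp: doubleton_eq_iff)
qed

lemma ncomp_insert:
  assumes fin: "finite V" and ok: "edges_ok V (insert e A)"
  shows "ncomp V A \<le> ncomp V (insert e A) + 1"
proof -
  have okA: "edges_ok V A" using ok unfolding edges_ok_def by blast
  from ok obtain u v where uv: "e = {u, v}" "u \<in> V" "v \<in> V" unfolding edges_ok_def by blast
  define bad where "bad = {\<sigma>\<in>good V A. \<sigma> u \<noteq> \<sigma> v}"
  define fl where "fl = (\<lambda>(\<sigma>::'a \<Rightarrow> bool) x. if (u, x) \<in> (adj_rel A)\<^sup>* then \<not> \<sigma> x else \<sigma> x)"
  have finC: "finite (Col V)" by (rule finite_Col[OF fin])
  have sub: "good V A \<subseteq> good V (insert e A) \<union> bad"
  proof
    fix \<sigma> assume s: "\<sigma> \<in> good V A"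
    show "\<sigma> \<in> good V (insert e A) \<union> bad"
    proof (cases "\<sigma> u = \<sigma> v")
      case True
      then have "cst \<sigma> e" unfolding uv cst_def by auto
      then show ?thesis using s by (auto simp: good_def)
    next
      case False then show ?thesis using s by (auto simp: bad_def)
    qed
  qed
  have inj: "inj_on fl bad"
  proof (rule inj_onI)
    fix s1 s2 assume "fl s1 = fl s2"
    then have h: "\<And>x. fl s1 x = fl s2 x" by simp
    show "s1 = s2"
    proof
      fix x show "s1 x = s2 x" using h[of x] unfolding fl_def by (cases "(u, x) \<in> (adj_rel A)\<^sup>*") auto
    qed
  qed
  have img: "fl ` bad \<subseteq> good V (insert e A)"
  proof
    fix \<tau> assume "\<tau> \<in> fl ` bad"
    then obtain \<sigma> where \<sigma>: "\<sigma> \<in> bad" and \<tau>: "\<tau> = fl \<sigma>" by auto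
    have sg: "\<sigma> \<in> good V A" and neq: "\<sigma> u \<noteq> \<sigma> v" using \<sigma> by (auto simp: bad_def)
    have "\<tau> \<in> Col V"
    proof -
      have "\<tau> x = False" if "x \<notin> V" for x
      proof -
        have "(u, x) \<notin> (adj_rel A)\<^sup>*" using reach_in_V[OF _ uv(2) okA] that by blast
        then have "\<tau> x = \<sigma> x" unfolding \<tau> fl_def by simp
        then show ?thesis using sg that by (simp add: good_def Col_def)
      qed
      then show ?thesis by (simp add: Col_def)
    qed
    moreover have "cst \<tau> e'" if "e' \<in> A" for e'
    proof -
      from okA that obtain a b where ab: "e' = {a, b}" unfolding edges_ok_def by blast
      have "(a, b) \<in> adj_rel A" "(b, a) \<in> adj_rel A" using that ab by (auto simp: adj_rel_def insert_commute)
      then have iff: "(u, a) \<in> (adj_rel A)\<^sup>* \<longleftrightarrow> (u, b) \<in> (adj_rel A)\<^sup>*"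
        by (meson rtrancl.rtrancl_into_rtrancl)
      have "\<sigma> a = \<sigma> b" using sg that ab by (auto simp: good_def cst_def)
      then have "\<tau> a = \<tau> b" unfolding \<tau> fl_def using iff by simp
      then show ?thesis unfolding ab cst_def by auto
    qed
    moreover have "cst \<tau> e"
    proof -
      have "(u, v) \<notin> (adj_rel A)\<^sup>*" using good_const[OF sg] neq by blast
      then have "\<tau> v = \<sigma> v" unfolding \<tau> fl_def by simp
      moreover have "\<tau> u = (\<not> \<sigma> u)" unfolding \<tau> fl_def by simp
      ultimately have "\<tau> u = \<tau> v" using neq by auto
      then show ?thesis unfolding uv cst_def by auto
    qed
    ultimately show "\<tau> \<in> good V (insert e A)" by (auto simp: good_def)
  qed
  have fg: "finite (good V (insert e A))" by (rule finite_subset[OF good_sub_Col finC])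
  have "card bad \<le> card (good V (insert e A))"
    by (rule card_inj_on_le[OF inj img fg])
  moreover have "card (good V A) \<le> card (good V (insert e A)) + card bad"
    using card_mono[OF _ sub] card_Un_le[of "good V (insert e A)" bad] fg
      finite_subset[OF _ finC, of bad] by (auto simp: bad_def good_def)
  ultimately have "card (good V A) \<le> 2 * card (good V (insert e A))" by simp
  then have "(2::nat) ^ ncomp V A \<le> 2 ^ (ncomp V (insert e A) + 1)"
    using card_good[OF fin ok] card_good[OF fin okA] by (simp only: power_Suc Suc_eq_plus1[symmetric] mult.commute)
  then show ?thesis using power_le_imp_le_exp[of 2] by (metis one_less_numeral_iff semiring_norm(76))
qed

lemma forest_ineq:
  assumes "finite A" "finite V" "edges_ok V A"
  shows "card V \<le> card A + ncomp V A"
  using assms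
proof (induction A rule: finite_induct)
  case empty then show ?case by (simp add: ncomp_empty)
next
  case (insert e A)
  have okA: "edges_ok V A" using insert.prems unfolding edges_ok_def by blast
  have "card V \<le> card A + ncomp V A" using insert.IH[OF insert.prems(1) okA] .
  moreover have "ncomp V A \<le> ncomp V (insert e A) + 1"
    by (rule ncomp_insert[OF insert.prems])
  ultimately show ?case using insert.hyps by simp
qed




lemma tutte_FK:
  assumes fV: "finite V" and fE: "finite E" and ok: "edges_ok V E"
    and c1: "ncomp V E = 1" and w: "w > 0"
  shows "2 * w ^ (card V - 1) * tutte V E (1 + 2 / w) (1 + w)
       = (\<Sum>A\<in>Pow E. 2 ^ ncomp V A * w ^ card A)"
  unfolding tutte_def sum_distrib_left
proof (rule sum.cong[OF refl])
  fix A assume "A \<in> Pow E"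
  then have AE: "A \<subseteq> E" by simp
  have okA: "edges_ok V A" using ok AE unfolding edges_ok_def by blast
  have fA: "finite A" using finite_subset[OF AE fE] .
  define k where "k = ncomp V A"
  have k1: "1 \<le> k" unfolding k_def using ncomp_anti[OF fV ok AE] c1 by simp
  have kV: "k \<le> card V" unfolding k_def by (rule ncomp_le[OF fV okA])
  have fo: "card V \<le> card A + k" unfolding k_def by (rule forest_ineq[OF fA fV okA])
  have e1: "grank V E - grank V A = k - 1"
    unfolding grank_def c1 k_def[symmetric] using k1 kV by simp
  have e2: "gnullity V A = card A + k - card V"
    unfolding gnullity_def grank_def k_def[symmetric] using kV fo by simp
  have e3: "(card V - 1) + (card A + k - card V) = (k - 1) + card A"
    using k1 kV fo by simp
  have "w ^ (card V - 1) * w ^ (card A + k - card V) = w ^ (k - 1) * w ^ card A"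
    by (simp only: power_add[symmetric] e3)
  moreover have "(2::real) ^ k = 2 * 2 ^ (k - 1)" using k1 by (cases k) auto
  ultimately show "2 * w ^ (card V - 1) * ((1 + 2 / w - 1) ^ (grank V E - grank V A) * (1 + w - 1) ^ gnullity V A)
       = 2 ^ ncomp V A * w ^ card A"
    unfolding e1 e2 k_def[symmetric] using w
    by (simp add: power_divide field_simps)
qed

lemma prod_ind:
  assumes "finite A"
  shows "(\<Prod>e\<in>A. (if cst \<sigma> e then w else (0::real))) = (if \<forall>e\<in>A. cst \<sigma> e then w ^ card A else 0)"
  using assms by (induction A rule: finite_induct) auto

lemma FK_spin:
  assumes fV: "finite V" and fE: "finite E" and ok: "edges_ok V E"
  shows "(\<Sum>A\<in>Pow E. 2 ^ ncomp V A * w ^ card A)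
       = (\<Sum>\<sigma>\<in>Col V. \<Prod>e\<in>E. (1 + (if cst \<sigma> e then w else (0::real))))"
proof -
  have "(\<Sum>\<sigma>\<in>Col V. \<Prod>e\<in>E. (1 + (if cst \<sigma> e then w else (0::real))))
      = (\<Sum>\<sigma>\<in>Col V. \<Sum>A\<in>Pow E. (if \<forall>e\<in>A. cst \<sigma> e then w ^ card A else 0))"
  proof (rule sum.cong[OF refl])
    fix \<sigma>
    have "(\<Prod>e\<in>E. (1 + (if cst \<sigma> e then w else (0::real))))
        = (\<Sum>A\<in>Pow E. (\<Prod>e\<in>A. (if cst \<sigma> e then w else 0)) * (\<Prod>e\<in>E - A. 1))"
      by (subst add.commute) (rule prod_add[OF fE])
    also have "\<dots> = (\<Sum>A\<in>Pow E. (if \<forall>e\<in>A. cst \<sigma> e then w ^ card A else 0))"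
      by (rule sum.cong[OF refl]) (simp add: prod_ind finite_subset[OF _ fE])
    finally show "(\<Prod>e\<in>E. (1 + (if cst \<sigma> e then w else (0::real))))
        = (\<Sum>A\<in>Pow E. (if \<forall>e\<in>A. cst \<sigma> e then w ^ card A else 0))" .
  qed
  also have "\<dots> = (\<Sum>A\<in>Pow E. \<Sum>\<sigma>\<in>Col V. (if \<forall>e\<in>A. cst \<sigma> e then w ^ card A else 0))"
    by (rule sum.swap)
  also have "\<dots> = (\<Sum>A\<in>Pow E. 2 ^ ncomp V A * w ^ card A)"
  proof (rule sum.cong[OF refl])
    fix A assume "A \<in> Pow E"
    then have okA: "edges_ok V A" using ok unfolding edges_ok_def by blast
    have "(\<Sum>\<sigma>\<in>Col V. (if \<forall>e\<in>A. cst \<sigma> e then w ^ card A else 0))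
        = real (card (good V A)) * w ^ card A"
      by (simp add: sum.If_cases[OF finite_Col[OF fV]] good_def Collect_conv_if Int_def)
    then show "(\<Sum>\<sigma>\<in>Col V. (if \<forall>e\<in>A. cst \<sigma> e then w ^ card A else 0)) = 2 ^ ncomp V A * w ^ card A"
      by (simp add: card_good[OF fV okA])
  qed
  finally show ?thesis by simp
qed

definition wt :: "real \<Rightarrow> ('v \<Rightarrow> bool) \<Rightarrow> 'v set \<Rightarrow> real" where
  "wt K \<sigma> e = (if cst \<sigma> e then exp K else exp (- K))"

lemma weight:
  assumes "finite E"
  shows "exp (- K * real (card E)) * (\<Prod>e\<in>E. (1 + (if cst \<sigma> e then exp (2 * K) - 1 else 0)))
       = (\<Prod>e\<in>E. wt K \<sigma> e)"
proof -
  have "exp (- K * real (card E)) = (\<Prod>e\<in>E. exp (- K))"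
    by (simp add: exp_of_nat_mult[symmetric] mult.commute)
  moreover have "exp (- K) * (1 + (if cst \<sigma> e then exp (2 * K) - 1 else 0)) = wt K \<sigma> e" for e
    by (simp add: wt_def exp_add[symmetric])
  ultimately show ?thesis by (simp only: prod.distrib[symmetric])
qed




abbreviation VV :: "nat \<Rightarrow> (int \<times> int) set" where "VV m \<equiv> sier_V (Suc m)"
abbreviation EE :: "nat \<Rightarrow> (int \<times> int) set set" where "EE m \<equiv> sier_E (Suc m)"
abbreviation sh1 :: "nat \<Rightarrow> int \<times> int \<Rightarrow> int \<times> int" where "sh1 m \<equiv> shiftp (0, 2 ^ m)"
abbreviation sh3 :: "nat \<Rightarrow> int \<times> int \<Rightarrow> int \<times> int" where "sh3 m \<equiv> shiftp (2 ^ m, 0)"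

lemma sV: "VV (Suc m) = sh1 m ` VV m \<union> VV m \<union> sh3 m ` VV m"
  by (simp add: Let_def)

lemma sE: "EE (Suc m) = (\<lambda>e. sh1 m ` e) ` EE m \<union> EE m \<union> (\<lambda>e. sh3 m ` e) ` EE m"
  by (simp add: Let_def)

lemma shiftp_eq[simp]: "shiftp (a, b) (x, y) = (x + a, y + b)"
  by (simp add: shiftp_def)

lemma inj_shift: "inj (shiftp d)"
  by (auto simp: inj_def shiftp_def prod_eq_iff)

lemma fin_VE: "finite (VV m) \<and> finite (EE m)"
  by (induction m) (auto simp: Let_def)

lemma tri: "p \<in> VV m \<Longrightarrow> 0 \<le> fst p \<and> 0 \<le> snd p \<and> fst p + snd p \<le> 2 ^ m"
proof (induction m arbitrary: p)
  case 0 then show ?case by auto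
next
  case (Suc m)
  from Suc.prems consider (a) q where "q \<in> VV m" "p = sh1 m q" | (b) "p \<in> VV m"
    | (c) q where "q \<in> VV m" "p = sh3 m q" unfolding sV by blast
  then show ?case
  proof cases
    case a then show ?thesis using Suc.IH[of q] by (cases q) auto
  next
    case b then show ?thesis using Suc.IH[of p] by (cases p) auto
  next
    case c then show ?thesis using Suc.IH[of q] by (cases q) auto
  qed
qed

lemma corners: "(0, 2 ^ m) \<in> VV m \<and> (0, 0) \<in> VV m \<and> (2 ^ m, 0) \<in> VV m"
proof (induction m)
  case 0 then show ?case by simp
next
  case (Suc m)
  have "(0, 2 ^ Suc m) = sh1 m (0, 2 ^ m)" by simp
  moreover have "(2 ^ Suc m, 0) = sh3 m (2 ^ m, 0)" by simp
  ultimately show ?case using Suc unfolding sV by (metis UnI1 UnI2 image_eqI)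
qed

lemma edges: "e \<in> EE m \<Longrightarrow> \<exists>u v. e = {u, v} \<and> u \<noteq> v \<and> u \<in> VV m \<and> v \<in> VV m"
proof (induction m arbitrary: e)
  case 0
  then consider "e = {(0,1),(0,0)}" | "e = {(0,1),(1,0)}" | "e = {(0,0),(1,0)}" by auto
  then show ?case by cases (metis (no_types) insertCI prod.inject zero_neq_one sier_V.simps(2))+
next
  case (Suc m)
  from Suc.prems consider (a) f where "f \<in> EE m" "e = sh1 m ` f" | (b) "e \<in> EE m"
    | (c) f where "f \<in> EE m" "e = sh3 m ` f" unfolding sE by blast
  then show ?case
  proof cases
    case a
    then obtain u v where "f = {u, v}" "u \<noteq> v" "u \<in> VV m" "v \<in> VV m" using Suc.IH by blast
    then show ?thesis using a inj_shift[of "(0, 2 ^ m)"] unfolding sV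
      by (intro exI[of _ "sh1 m u"] exI[of _ "sh1 m v"]) (auto simp: inj_eq)
  next
    case b
    then obtain u v where "e = {u, v}" "u \<noteq> v" "u \<in> VV m" "v \<in> VV m" using Suc.IH by blast
    then show ?thesis unfolding sV by blast
  next
    case c
    then obtain u v where "f = {u, v}" "u \<noteq> v" "u \<in> VV m" "v \<in> VV m" using Suc.IH by blast
    then show ?thesis using c inj_shift[of "(2 ^ m, 0)"] unfolding sV
      by (intro exI[of _ "sh3 m u"] exI[of _ "sh3 m v"]) (auto simp: inj_eq)
  qed
qed

lemma edges_ok_EE: "edges_ok (VV m) (EE m)"
  unfolding edges_ok_def using edges by blast

lemma int12: "p \<in> VV m \<Longrightarrow> q \<in> VV m \<Longrightarrow> sh1 m p = q \<Longrightarrow> p = (0, 0) \<and> q = (0, 2 ^ m)"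
  using tri[of p m] tri[of q m] by (cases p; cases q) auto

lemma int13: "p \<in> VV m \<Longrightarrow> q \<in> VV m \<Longrightarrow> sh3 m p = sh1 m q \<Longrightarrow> p = (0, 2 ^ m) \<and> q = (2 ^ m, 0)"
  using tri[of p m] tri[of q m] by (cases p; cases q) auto

lemma int23: "p \<in> VV m \<Longrightarrow> q \<in> VV m \<Longrightarrow> sh3 m p = q \<Longrightarrow> p = (0, 0) \<and> q = (2 ^ m, 0)"
  using tri[of p m] tri[of q m] by (cases p; cases q) auto




lemma cst_img: "cst \<sigma> (f ` e) = cst (\<sigma> \<circ> f) e"
  by (auto simp: cst_def)

lemma edge_sub: "e \<in> EE m \<Longrightarrow> e \<subseteq> VV m"
  using edges by blast

lemma conn: "(\<forall>e\<in>EE m. cst \<sigma> e) \<Longrightarrow> p \<in> VV m \<Longrightarrow> \<sigma> p = \<sigma> (0, 0)"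
proof (induction m arbitrary: \<sigma> p)
  case 0
  have "cst \<sigma> {(0,1),(0,0)}" "cst \<sigma> {(0,0),(1,0)}" using 0(1) by auto
  then have "\<sigma> (0,1) = \<sigma> (0,0)" "\<sigma> (1,0) = \<sigma> (0,0)" unfolding cst_def by blast+
  then show ?case using 0(2) by auto
next
  case (Suc m)
  have h1: "\<forall>e\<in>EE m. cst (\<sigma> \<circ> sh1 m) e" using Suc.prems(1) unfolding sE by (auto simp: cst_img[symmetric])
  have h2: "\<forall>e\<in>EE m. cst \<sigma> e" using Suc.prems(1) unfolding sE by auto
  have h3: "\<forall>e\<in>EE m. cst (\<sigma> \<circ> sh3 m) e" using Suc.prems(1) unfolding sE by (auto simp: cst_img[symmetric])
  have c: "(0, 2 ^ m) \<in> VV m" "(2 ^ m, 0) \<in> VV m" using corners by auto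
  have t1: "\<sigma> (0, 2 ^ m) = \<sigma> (0, 0)" using Suc.IH[OF h2 c(1)] .
  have t3: "\<sigma> (2 ^ m, 0) = \<sigma> (0, 0)" using Suc.IH[OF h2 c(2)] .
  from Suc.prems(2) consider (a) q where "q \<in> VV m" "p = sh1 m q" | (b) "p \<in> VV m"
    | (c) q where "q \<in> VV m" "p = sh3 m q" unfolding sV by blast
  then show ?case
  proof cases
    case a then show ?thesis using Suc.IH[OF h1 a(1)] t1 by simp
  next
    case b then show ?thesis using Suc.IH[OF h2 b] by simp
  next
    case c then show ?thesis using Suc.IH[OF h3 c(1)] t3 by simp
  qed
qed

lemma ncomp1: "ncomp (VV m) (EE m) = 1"
proof -
  have "good (VV m) (EE m) = {(\<lambda>p. p \<in> VV m), (\<lambda>_. False)}"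
  proof
    show "good (VV m) (EE m) \<subseteq> {(\<lambda>p. p \<in> VV m), (\<lambda>_. False)}"
    proof
      fix \<sigma> assume s: "\<sigma> \<in> good (VV m) (EE m)"
      then have cs: "\<forall>e\<in>EE m. cst \<sigma> e" and col: "\<sigma> \<in> Col (VV m)" by (auto simp: good_def)
      show "\<sigma> \<in> {(\<lambda>p. p \<in> VV m), (\<lambda>_. False)}"
      proof (cases "\<sigma> (0, 0)")
        case True
        have "\<sigma> = (\<lambda>p. p \<in> VV m)"
        proof
          fix p
          have colx: "\<sigma> p = False" if "p \<notin> VV m" using col that unfolding Col_def by blast
          show "\<sigma> p = (p \<in> VV m)"
            using conn[OF cs, of p] True colx by (cases "p \<in> VV m") auto
        qed
        then show ?thesis by simp
      next
        case False
        have "\<sigma> = (\<lambda>_. False)"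
        proof
          fix p
          have colx: "\<sigma> p = False" if "p \<notin> VV m" using col that unfolding Col_def by blast
          show "\<sigma> p = False"
            using conn[OF cs, of p] False colx by (cases "p \<in> VV m") auto
        qed
        then show ?thesis by simp
      qed
    qed
    show "{(\<lambda>p. p \<in> VV m), (\<lambda>_. False)} \<subseteq> good (VV m) (EE m)"
      by (auto simp: good_def Col_def cst_def dest: edge_sub)
  qed
  moreover have "(\<lambda>p. p \<in> VV m) \<noteq> (\<lambda>_. False)"
    using corners[of m] by (auto simp: fun_eq_iff)
  ultimately have "card (good (VV m) (EE m)) = 2" by simp
  then have "(2::nat) ^ ncomp (VV m) (EE m) = 2 ^ 1"
    using card_good[OF conjunct1[OF fin_VE] edges_ok_EE] by simp
  then show ?thesis by (metis power_inject_exp one_less_numeral_iff semiring_norm(76))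
qed

definition W :: "real \<Rightarrow> nat \<Rightarrow> (int \<times> int \<Rightarrow> bool) \<Rightarrow> real" where
  "W K m \<sigma> = (\<Prod>e\<in>EE m. wt K \<sigma> e)"

definition rs :: "nat \<Rightarrow> (int \<times> int \<Rightarrow> bool) \<Rightarrow> (int \<times> int \<Rightarrow> bool)" where
  "rs m f = (\<lambda>p. if p \<in> VV m then f p else False)"

lemma cst_rs: "e \<subseteq> VV m \<Longrightarrow> cst (rs m g) e = cst g e"
  unfolding cst_def rs_def by (auto simp: subset_iff)

lemma inj_img: "inj f \<Longrightarrow> inj_on (\<lambda>e. f ` e) X"
  by (auto simp: inj_on_def inj_image_eq_iff)

lemma disj12: "(\<lambda>e. sh1 m ` e) ` EE m \<inter> EE m = {}"
proof (rule ccontr)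
  assume "\<not> ?thesis"
  then obtain f where f: "f \<in> EE m" "sh1 m ` f \<in> EE m" by auto
  from edges[OF f(1)] obtain u v where uv: "f = {u, v}" "u \<noteq> v" "u \<in> VV m" "v \<in> VV m" by blast
  have "sh1 m u \<in> VV m" "sh1 m v \<in> VV m" using edge_sub[OF f(2)] uv by auto
  then show False using int12[OF uv(3)] int12[OF uv(4)] uv(2) by blast
qed

lemma disj13: "(\<lambda>e. sh1 m ` e) ` EE m \<inter> (\<lambda>e. sh3 m ` e) ` EE m = {}"
proof (rule ccontr)
  assume "\<not> ?thesis"
  then obtain f g where f: "f \<in> EE m" "g \<in> EE m" "sh1 m ` f = sh3 m ` g" by auto
  from edges[OF f(2)] obtain u v where uv: "g = {u, v}" "u \<noteq> v" "u \<in> VV m" "v \<in> VV m" by blast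
  have "sh3 m u \<in> sh1 m ` f" "sh3 m v \<in> sh1 m ` f" using f(3) uv by auto
  then have "sh3 m u \<in> sh1 m ` VV m" "sh3 m v \<in> sh1 m ` VV m" using edge_sub[OF f(1)] by auto
  then show False using int13[OF uv(3)] int13[OF uv(4)] uv(2) by blast
qed

lemma disj23: "EE m \<inter> (\<lambda>e. sh3 m ` e) ` EE m = {}"
proof (rule ccontr)
  assume "\<not> ?thesis"
  then obtain f where f: "f \<in> EE m" "sh3 m ` f \<in> EE m" by auto
  from edges[OF f(1)] obtain u v where uv: "f = {u, v}" "u \<noteq> v" "u \<in> VV m" "v \<in> VV m" by blast
  have "sh3 m u \<in> VV m" "sh3 m v \<in> VV m" using edge_sub[OF f(2)] uv by auto
  then show False using int23[OF uv(3)] int23[OF uv(4)] uv(2) by blast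
qed

lemma prod_img:
  assumes "inj f"
  shows "(\<Prod>e\<in>(\<lambda>e. f ` e) ` EE m. wt K \<sigma> e) = W K m (rs m (\<sigma> \<circ> f))"
proof -
  have "(\<Prod>e\<in>(\<lambda>e. f ` e) ` EE m. wt K \<sigma> e) = (\<Prod>e\<in>EE m. wt K \<sigma> (f ` e))"
    using prod.reindex[OF inj_img[OF assms], of "wt K \<sigma>" "EE m"] by (simp add: comp_def)
  also have "\<dots> = W K m (rs m (\<sigma> \<circ> f))"
    unfolding W_def by (rule prod.cong[OF refl]) (simp add: wt_def cst_img cst_rs edge_sub)
  finally show ?thesis .
qed

lemma W_split:
  "W K (Suc m) \<sigma> = W K m (rs m (\<sigma> \<circ> sh1 m)) * W K m (rs m \<sigma>) * W K m (rs m (\<sigma> \<circ> sh3 m))"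
proof -
  have fE: "finite (EE m)" using fin_VE by blast
  have "W K (Suc m) \<sigma> = (\<Prod>e\<in>(\<lambda>e. sh1 m ` e) ` EE m \<union> EE m. wt K \<sigma> e) *
       (\<Prod>e\<in>(\<lambda>e. sh3 m ` e) ` EE m. wt K \<sigma> e)"
    unfolding W_def sE
    by (rule prod.union_disjoint) (use fE disj13[of m] disj23[of m] in blast)+
  also have "(\<Prod>e\<in>(\<lambda>e. sh1 m ` e) ` EE m \<union> EE m. wt K \<sigma> e) =
     (\<Prod>e\<in>(\<lambda>e. sh1 m ` e) ` EE m. wt K \<sigma> e) * (\<Prod>e\<in>EE m. wt K \<sigma> e)"
    by (rule prod.union_disjoint) (use fE disj12 in auto)
  also have "(\<Prod>e\<in>EE m. wt K \<sigma> e) = W K m (rs m \<sigma>)"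
    unfolding W_def by (rule prod.cong[OF refl]) (simp add: wt_def cst_rs edge_sub)
  finally show ?thesis using prod_img[OF inj_shift] by simp
qed




lemma UNIV_bool3: "(UNIV::(bool\<times>bool\<times>bool) set) = {(True,True,True), (True,True,False), (True,False,True), (True,False,False),
  (False,True,True), (False,True,False), (False,False,True), (False,False,False)}"
  by auto

lemma sum_bool3: "(\<Sum>\<tau>\<in>(UNIV::(bool\<times>bool\<times>bool) set). F \<tau>) =
  F (True,True,True) + F (True,True,False) + F (True,False,True) + F (True,False,False) +
  F (False,True,True) + F (False,True,False) + F (False,False,True) + F (False,False,False)"
  unfolding UNIV_bool3 by (simp add: add_ac)

lemma sum3:
  assumes "finite A" "finite B" "finite C"
  shows "(\<Sum>\<tau>\<in>A \<times> B \<times> C. f (fst \<tau>) * g (fst (snd \<tau>)) * h (snd (snd \<tau>)))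
       = sum f A * sum g B * (sum h C :: real)"
proof -
  have "(\<Sum>\<tau>\<in>A \<times> B \<times> C. f (fst \<tau>) * g (fst (snd \<tau>)) * h (snd (snd \<tau>)))
      = (\<Sum>a\<in>A. \<Sum>q\<in>B \<times> C. f a * g (fst q) * h (snd q))"
    by (simp add: sum.cartesian_product')
  also have "\<dots> = (\<Sum>a\<in>A. \<Sum>b\<in>B. \<Sum>c\<in>C. f a * g b * h c)"
    by (rule sum.cong[OF refl]) (simp add: sum.cartesian_product')
  also have "\<dots> = sum f A * sum g B * sum h C"
    unfolding sum_product unfolding sum_distrib_right unfolding sum_distrib_left by (simp only: mult.assoc) (rule sum.cong[OF refl], rule sum.swap)
  finally show ?thesis .
qed




definition CC :: "nat \<Rightarrow> bool \<Rightarrow> bool \<Rightarrow> bool \<Rightarrow> (int \<times> int \<Rightarrow> bool) set" where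
  "CC m a b c = {\<sigma>\<in>Col (VV m). \<sigma> (0, 2 ^ m) = a \<and> \<sigma> (0, 0) = b \<and> \<sigma> (2 ^ m, 0) = c}"

definition TT :: "nat \<Rightarrow> bool \<Rightarrow> bool \<Rightarrow> bool \<Rightarrow>
   ((int \<times> int \<Rightarrow> bool) \<times> (int \<times> int \<Rightarrow> bool) \<times> (int \<times> int \<Rightarrow> bool)) set" where
  "TT m a b c = {(s1, s2, s3). s1 \<in> Col (VV m) \<and> s2 \<in> Col (VV m) \<and> s3 \<in> Col (VV m) \<and>
      s1 (0, 2 ^ m) = a \<and> s2 (0, 0) = b \<and> s3 (2 ^ m, 0) = c \<and>
      s1 (0, 0) = s2 (0, 2 ^ m) \<and> s1 (2 ^ m, 0) = s3 (0, 2 ^ m) \<and> s2 (2 ^ m, 0) = s3 (0, 0)}"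

definition Phi3 :: "nat \<Rightarrow> (int \<times> int \<Rightarrow> bool) \<Rightarrow>
   (int \<times> int \<Rightarrow> bool) \<times> (int \<times> int \<Rightarrow> bool) \<times> (int \<times> int \<Rightarrow> bool)" where
  "Phi3 m \<sigma> = (rs m (\<sigma> \<circ> sh1 m), rs m \<sigma>, rs m (\<sigma> \<circ> sh3 m))"

definition glue :: "nat \<Rightarrow> (int \<times> int \<Rightarrow> bool) \<Rightarrow> (int \<times> int \<Rightarrow> bool) \<Rightarrow> (int \<times> int \<Rightarrow> bool) \<Rightarrow> (int \<times> int \<Rightarrow> bool)" where
  "glue m s1 s2 s3 p = (if p \<in> sh1 m ` VV m then s1 (fst p, snd p - 2 ^ m)
     else if p \<in> VV m then s2 p
     else if p \<in> sh3 m ` VV m then s3 (fst p - 2 ^ m, snd p) else False)"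

lemma pow_suc_int: "(2::int) ^ Suc m = 2 ^ m + 2 ^ m" by simp

lemma col_out: "\<sigma> \<in> Col V \<Longrightarrow> p \<notin> V \<Longrightarrow> \<sigma> p = False"
  unfolding Col_def by blast

lemma Phi3_bij: "bij_betw (Phi3 m) (CC (Suc m) a b c) (TT m a b c)"
  unfolding bij_betw_def
proof (intro conjI)
  have c: "(0, 2 ^ m) \<in> VV m" "(0, 0) \<in> VV m" "(2 ^ m, 0) \<in> VV m" using corners by auto
  show "inj_on (Phi3 m) (CC (Suc m) a b c)"
  proof (rule inj_onI)
    fix \<sigma> \<tau> assume s: "\<sigma> \<in> CC (Suc m) a b c" and t: "\<tau> \<in> CC (Suc m) a b c"
      and e: "Phi3 m \<sigma> = Phi3 m \<tau>"
    then have e1: "rs m (\<sigma> \<circ> sh1 m) = rs m (\<tau> \<circ> sh1 m)" and e2: "rs m \<sigma> = rs m \<tau>"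
      and e3: "rs m (\<sigma> \<circ> sh3 m) = rs m (\<tau> \<circ> sh3 m)" by (auto simp: Phi3_def)
    have sc: "\<sigma> \<in> Col (VV (Suc m))" and tc: "\<tau> \<in> Col (VV (Suc m))" using s t by (auto simp: CC_def)
    show "\<sigma> = \<tau>"
    proof
      fix p
      show "\<sigma> p = \<tau> p"
      proof (cases "p \<in> VV (Suc m)")
        case False then show ?thesis using col_out[OF sc] col_out[OF tc] by simp
      next
        case True
        then consider (a) q where "q \<in> VV m" "p = sh1 m q" | (b) "p \<in> VV m"
          | (c) q where "q \<in> VV m" "p = sh3 m q" unfolding sV by blast
        then show ?thesis
        proof cases
          case a then show ?thesis using fun_cong[OF e1, of q] by (simp add: rs_def)
        next
          case b then show ?thesis using fun_cong[OF e2, of p] by (simp add: rs_def)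
        next
          case c then show ?thesis using fun_cong[OF e3, of q] by (simp add: rs_def)
        qed
      qed
    qed
  qed
  show "Phi3 m ` CC (Suc m) a b c = TT m a b c"
  proof
    show "Phi3 m ` CC (Suc m) a b c \<subseteq> TT m a b c"
    proof
      fix \<tau> assume "\<tau> \<in> Phi3 m ` CC (Suc m) a b c"
      then obtain \<sigma> where s: "\<sigma> \<in> CC (Suc m) a b c" and \<tau>: "\<tau> = Phi3 m \<sigma>" by auto
      have "\<sigma> (0, 2 ^ m + 2 ^ m) = a" "\<sigma> (0,0) = b" "\<sigma> (2 ^ m + 2 ^ m, 0) = c"
        using s by (auto simp: CC_def)
      then show "\<tau> \<in> TT m a b c" unfolding \<tau> TT_def Phi3_def using c
        by (auto simp: rs_def Col_def)
    qed
    show "TT m a b c \<subseteq> Phi3 m ` CC (Suc m) a b c"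
    proof
      fix \<tau> assume t: "\<tau> \<in> TT m a b c"
      then obtain s1 s2 s3 where \<tau>: "\<tau> = (s1, s2, s3)" by (cases \<tau>) auto
      have s1: "s1 \<in> Col (VV m)" and s2: "s2 \<in> Col (VV m)" and s3: "s3 \<in> Col (VV m)"
        and ca: "s1 (0, 2 ^ m) = a" and cb: "s2 (0, 0) = b" and cc: "s3 (2 ^ m, 0) = c"
        and k1: "s1 (0, 0) = s2 (0, 2 ^ m)" and k2: "s1 (2 ^ m, 0) = s3 (0, 2 ^ m)"
        and k3: "s2 (2 ^ m, 0) = s3 (0, 0)"
        using t unfolding \<tau> TT_def by auto
      define \<sigma> where "\<sigma> = glue m s1 s2 s3"
      have pos: "(0::int) < 2 ^ m" by simp
      have n1: "(0, 0) \<notin> sh1 m ` VV m"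
      proof
        assume "(0, 0) \<in> sh1 m ` VV m"
        then obtain q where "q \<in> VV m" "(0, 0) = sh1 m q" by auto
        then show False using tri[of q m] pos by (cases q) auto
      qed
      have n2: "(2 ^ m + 2 ^ m, 0) \<notin> sh1 m ` VV m"
      proof
        assume "(2 ^ m + 2 ^ m, 0) \<in> sh1 m ` VV m"
        then obtain q where "q \<in> VV m" "(2 ^ m + 2 ^ m, 0) = sh1 m q" by auto
        then show False using tri[of q m] pos by (cases q) auto
      qed
      have n3: "(2 ^ m + 2 ^ m, 0) \<notin> VV m" using tri[of "(2 ^ m + 2 ^ m, 0)" m] pos by auto
      have top': "(0, 2 ^ m + 2 ^ m) = sh1 m (0, 2 ^ m)" by simp
      have rgt': "(2 ^ m + 2 ^ m, 0) = sh3 m (2 ^ m, 0)" by simp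
      have "\<sigma> \<in> Col (VV (Suc m))"
        unfolding Col_def \<sigma>_def glue_def sV by auto
      moreover have "\<sigma> (0, 2 ^ Suc m) = a"
      proof -
        have m1: "(0, 2 ^ Suc m) \<in> sh1 m ` VV m" by (rule image_eqI[of _ _ "(0,2^m)"]) (use c(1) in simp_all)
        then show ?thesis using ca by (simp add: \<sigma>_def glue_def)
      qed
      moreover have "\<sigma> (0, 0) = b"
        unfolding \<sigma>_def glue_def using cb c(2) n1 by simp
      moreover have "\<sigma> (2 ^ Suc m, 0) = c"
      proof -
        have m3: "(2 ^ Suc m, 0) \<in> sh3 m ` VV m" by (rule image_eqI[of _ _ "(2^m,0)"]) (use c(3) in simp_all)
        have "(2 ^ Suc m, 0) \<notin> sh1 m ` VV m" "(2 ^ Suc m, 0) \<notin> VV m" using n2 n3 by (simp_all add: pow_suc_int)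
        then show ?thesis using cc m3 by (simp add: \<sigma>_def glue_def)
      qed
      ultimately have sC: "\<sigma> \<in> CC (Suc m) a b c" by (simp add: CC_def)
      have p1: "rs m (\<sigma> \<circ> sh1 m) = s1"
      proof
        fix q show "rs m (\<sigma> \<circ> sh1 m) q = s1 q"
        proof (cases "q \<in> VV m")
          case True
          then have "sh1 m q \<in> sh1 m ` VV m" by blast
          then show ?thesis using True by (cases q) (simp add: rs_def \<sigma>_def glue_def)
        next
          case False then show ?thesis using col_out[OF s1] by (simp add: rs_def)
        qed
      qed
      have p2: "rs m \<sigma> = s2"
      proof
        fix q show "rs m \<sigma> q = s2 q"
        proof (cases "q \<in> VV m")
          case True
          show ?thesis
          proof (cases "q \<in> sh1 m ` VV m")
            case True2: True
            then obtain q' where q': "q' \<in> VV m" "q = sh1 m q'" by auto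
            then have "q' = (0, 0) \<and> q = (0, 2 ^ m)" using int12[OF q'(1) True] by simp
            then show ?thesis using True True2 k1 by (simp add: rs_def \<sigma>_def glue_def)
          next
            case False then show ?thesis using True by (simp add: rs_def \<sigma>_def glue_def)
          qed
        next
          case False then show ?thesis using col_out[OF s2] by (simp add: rs_def)
        qed
      qed
      have p3: "rs m (\<sigma> \<circ> sh3 m) = s3"
      proof
        fix q show "rs m (\<sigma> \<circ> sh3 m) q = s3 q"
        proof (cases "q \<in> VV m")
          case True
          show ?thesis
          proof (cases "sh3 m q \<in> sh1 m ` VV m")
            case True2: True
            then obtain q' where q': "q' \<in> VV m" "sh3 m q = sh1 m q'" by auto
            then have "q = (0, 2 ^ m) \<and> q' = (2 ^ m, 0)" using int13[OF True q'(1)] by simp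
            then show ?thesis using True True2 k2 by (simp add: rs_def \<sigma>_def glue_def)
          next
            case F2: False
            show ?thesis
            proof (cases "sh3 m q \<in> VV m")
              case True3: True
              then have "q = (0, 0)" using int23[OF True _ refl] by simp
              then show ?thesis using True F2 True3 k3 by (simp add: rs_def \<sigma>_def glue_def)
            next
              case F3: False
              have "sh3 m q \<in> sh3 m ` VV m" using True by blast
              then show ?thesis using True F2 F3 by (cases q) (simp add: rs_def \<sigma>_def glue_def)
            qed
          qed
        next
          case False then show ?thesis using col_out[OF s3] by (simp add: rs_def)
        qed
      qed
      have "Phi3 m \<sigma> = \<tau>" unfolding Phi3_def \<tau> p1 p2 p3 ..
      then show "\<tau> \<in> Phi3 m ` CC (Suc m) a b c" using sC by blast
    qed
  qed
qed




definition Zc :: "real \<Rightarrow> nat \<Rightarrow> bool \<Rightarrow> bool \<Rightarrow> bool \<Rightarrow> real" where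
  "Zc K m a b c = (\<Sum>\<sigma>\<in>CC m a b c. W K m \<sigma>)"

lemma fin_Col_VV: "finite (Col (VV m))"
  using finite_Col fin_VE by blast

lemma fin_CC: "finite (CC m a b c)"
  by (rule finite_subset[OF _ fin_Col_VV]) (auto simp: CC_def)

lemma fin_TT: "finite (TT m a b c)"
proof -
  have "TT m a b c \<subseteq> Col (VV m) \<times> Col (VV m) \<times> Col (VV m)" unfolding TT_def by blast
  moreover have "finite (Col (VV m) \<times> Col (VV m) \<times> Col (VV m))" using fin_Col_VV by simp
  ultimately show ?thesis by (rule finite_subset)
qed

lemma Zc_rec:
  "Zc K (Suc m) a b c = (\<Sum>\<tau>\<in>UNIV. Zc K m a (fst \<tau>) (fst (snd \<tau>)) *
      Zc K m (fst \<tau>) b (snd (snd \<tau>)) * Zc K m (fst (snd \<tau>)) (snd (snd \<tau>)) c)"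
proof -
  define F where "F = (\<lambda>\<tau>. W K m (fst \<tau>) * W K m (fst (snd \<tau>)) * W K m (snd (snd \<tau>)))"
  define g where "g = (\<lambda>\<tau>::(int \<times> int \<Rightarrow> bool) \<times> (int \<times> int \<Rightarrow> bool) \<times> (int \<times> int \<Rightarrow> bool).
      (fst \<tau> (0, 0), fst \<tau> (2 ^ m, 0), fst (snd \<tau>) (2 ^ m, 0)))"
  have "Zc K (Suc m) a b c = (\<Sum>\<sigma>\<in>CC (Suc m) a b c. F (Phi3 m \<sigma>))"
    unfolding Zc_def F_def Phi3_def by (simp add: W_split)
  also have "\<dots> = sum F (TT m a b c)"
    by (rule sum.reindex_bij_betw[OF Phi3_bij])
  also have "\<dots> = (\<Sum>y\<in>UNIV. sum F {\<tau>\<in>TT m a b c. g \<tau> = y})"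
    by (rule sum.group[symmetric]) (auto simp: fin_TT)
  also have "\<dots> = (\<Sum>\<tau>\<in>UNIV. Zc K m a (fst \<tau>) (fst (snd \<tau>)) *
      Zc K m (fst \<tau>) b (snd (snd \<tau>)) * Zc K m (fst (snd \<tau>)) (snd (snd \<tau>)) c)"
  proof (rule sum.cong[OF refl])
    fix y :: "bool \<times> bool \<times> bool"
    obtain x1 x2 x3 where y: "y = (x1, x2, x3)" by (cases y) auto
    have "{\<tau>\<in>TT m a b c. g \<tau> = y} = CC m a x1 x2 \<times> CC m x1 b x3 \<times> CC m x2 x3 c"
    proof (rule set_eqI)
      fix \<tau> :: "(int \<times> int \<Rightarrow> bool) \<times> (int \<times> int \<Rightarrow> bool) \<times> (int \<times> int \<Rightarrow> bool)"
      obtain s1 s2 s3 where t: "\<tau> = (s1, s2, s3)" by (cases \<tau>) auto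
      show "\<tau> \<in> {\<tau>\<in>TT m a b c. g \<tau> = y} \<longleftrightarrow> \<tau> \<in> CC m a x1 x2 \<times> CC m x1 b x3 \<times> CC m x2 x3 c"
        unfolding t y g_def TT_def CC_def mem_Collect_eq mem_Times_iff prod.case fst_conv snd_conv prod.inject
        by blast
    qed
    then show "sum F {\<tau>\<in>TT m a b c. g \<tau> = y} = Zc K m a (fst y) (fst (snd y)) *
      Zc K m (fst y) b (snd (snd y)) * Zc K m (fst (snd y)) (snd (snd y)) c"
      unfolding F_def Zc_def y by (simp add: sum3 fin_CC)
  qed
  finally show ?thesis .
qed


fun AB :: "real \<Rightarrow> nat \<Rightarrow> real \<times> real" where
  "AB K 0 = (exp K ^ 3, exp K * exp (- K) ^ 2)"
| "AB K (Suc m) = (case AB K m of (A, B) \<Rightarrow>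
      (A ^ 3 + 3 * A * B ^ 2 + 4 * B ^ 3, A ^ 2 * B + 4 * A * B ^ 2 + 3 * B ^ 3))"

lemma cst_pair: "cst \<sigma> {u, v} = (\<sigma> u = \<sigma> v)"
  unfolding cst_def by auto

lemma Zc0: "Zc K 0 a b c = (if a = b \<and> b = c then fst (AB K 0) else snd (AB K 0))"
proof -
  define \<sigma>0 where "\<sigma>0 = (\<lambda>p::int \<times> int. if p = (0, 1) then a else if p = (0, 0) then b
      else if p = (1, 0) then c else False)"
  have "CC 0 a b c = {\<sigma>0}"
  proof
    show "CC 0 a b c \<subseteq> {\<sigma>0}"
    proof
      fix \<sigma> assume s: "\<sigma> \<in> CC 0 a b c"
      have "\<sigma> = \<sigma>0"
      proof
        fix p
        have col: "\<sigma> q = False" if "q \<notin> VV 0" for q using s that unfolding CC_def Col_def by blast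
        have v: "\<sigma> (0, 1) = a" "\<sigma> (0, 0) = b" "\<sigma> (1, 0) = c" using s unfolding CC_def by auto
        show "\<sigma> p = \<sigma>0 p"
        proof (cases "p \<in> VV 0")
          case True then show ?thesis using v unfolding \<sigma>0_def by auto
        next
          case False then show ?thesis using col[OF False] unfolding \<sigma>0_def by auto
        qed
      qed
      then show "\<sigma> \<in> {\<sigma>0}" by simp
    qed
    show "{\<sigma>0} \<subseteq> CC 0 a b c"
      unfolding CC_def Col_def \<sigma>0_def by auto
  qed
  then have "Zc K 0 a b c = W K 0 \<sigma>0" by (simp add: Zc_def)
  also have "\<dots> = wt K \<sigma>0 {(0, 1), (0, 0)} * (wt K \<sigma>0 {(0, 1), (1, 0)} * wt K \<sigma>0 {(0, 0), (1, 0)})"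
    unfolding W_def by (simp add: doubleton_eq_iff)
  also have "\<dots> = (if a = b \<and> b = c then fst (AB K 0) else snd (AB K 0))"
    unfolding wt_def cst_pair \<sigma>0_def
    by (cases a; cases b; cases c) (simp_all add: power2_eq_square power3_eq_cube mult_ac)
  finally show ?thesis .
qed

lemma Zc_ansatz: "Zc K m a b c = (if a = b \<and> b = c then fst (AB K m) else snd (AB K m))"
proof (induction m arbitrary: a b c)
  case 0 then show ?case by (rule Zc0)
next
  case (Suc m)
  obtain A B where ab: "AB K m = (A, B)" by (cases "AB K m") auto
  have IH: "\<And>a b c. Zc K m a b c = (if a = b \<and> b = c then A else B)" using Suc.IH ab by simp
  show ?case unfolding Zc_rec sum_bool3 IH using ab
    by (cases a; cases b; cases c) (simp_all add: power2_eq_square power3_eq_cube algebra_simps)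
qed

lemma total:
  "(\<Sum>\<sigma>\<in>Col (VV m). W K m \<sigma>) = 2 * fst (AB K m) + 6 * snd (AB K m)"
proof -
  define g where "g = (\<lambda>\<sigma>::int \<times> int \<Rightarrow> bool. (\<sigma> (0, 2 ^ m), \<sigma> (0, 0), \<sigma> (2 ^ m, 0)))"
  have "(\<Sum>\<sigma>\<in>Col (VV m). W K m \<sigma>) = (\<Sum>y\<in>UNIV. sum (W K m) {\<sigma>\<in>Col (VV m). g \<sigma> = y})"
    by (rule sum.group[symmetric]) (auto simp: fin_Col_VV)
  also have "\<dots> = (\<Sum>y\<in>UNIV. Zc K m (fst y) (fst (snd y)) (snd (snd y)))"
  proof (rule sum.cong[OF refl])
    fix y :: "bool \<times> bool \<times> bool"
    obtain x1 x2 x3 where y: "y = (x1, x2, x3)" by (cases y) auto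
    have "{\<sigma>\<in>Col (VV m). g \<sigma> = y} = CC m x1 x2 x3"
      unfolding y g_def CC_def prod.inject by blast
    then show "sum (W K m) {\<sigma>\<in>Col (VV m). g \<sigma> = y} = Zc K m (fst y) (fst (snd y)) (snd (snd y))"
      unfolding Zc_def y by simp
  qed
  also have "\<dots> = 2 * fst (AB K m) + 6 * snd (AB K m)"
    unfolding sum_bool3 Zc_ansatz by simp
  finally show ?thesis .
qed




definition PP :: "nat \<Rightarrow> real \<Rightarrow> real" where
  "PP n z = z powr (real (3 ^ n) / 2) * (\<Prod>k = 1..n. phi k z ^ (3 ^ (n - k)))"

lemma Phi_PP: "Phi n z = PP n z * (phi (n + 1) z - 1)"
  by (simp add: Phi_def PP_def)

lemma PP_Suc:
  assumes "z > 0"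
  shows "PP (Suc n) z = PP n z ^ 3 * phi (Suc n) z"
proof -
  have a: "z powr (real (3 ^ Suc n) / 2) = (z powr (real (3 ^ n) / 2)) ^ 3"
    using assms by (simp add: powr_power)
  have b: "(\<Prod>k = 1..Suc n. phi k z ^ (3 ^ (Suc n - k)))
      = phi (Suc n) z * (\<Prod>k = 1..n. phi k z ^ (3 ^ (Suc n - k)))"
    by (simp add: prod.cl_ivl_Suc mult.commute)
  have c: "(\<Prod>k = 1..n. phi k z ^ (3 ^ (Suc n - k))) = (\<Prod>k = 1..n. phi k z ^ (3 ^ (n - k))) ^ 3"
    unfolding prod_power_distrib
  proof (rule prod.cong[OF refl])
    fix k assume "k \<in> {1..n}"
    then have "Suc n - k = Suc (n - k)" by auto
    then show "phi k z ^ 3 ^ (Suc n - k) = (phi k z ^ 3 ^ (n - k)) ^ 3"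
      by (simp add: power_mult[symmetric] mult.commute)
  qed
  show ?thesis unfolding PP_def a b c by (simp add: power_mult_distrib mult_ac)
qed

definition ee :: "nat \<Rightarrow> nat" where "ee n = (3 ^ n + 3) div 2"

lemma ee_Suc: "ee (Suc n) + 3 = 3 * ee n"
proof -
  have "odd ((3::nat) ^ n)" by simp
  then obtain j where j: "(3::nat) ^ n = 2 * j + 1" by (rule oddE)
  have "(3::nat) ^ Suc n = 6 * j + 3" using j by simp
  then show ?thesis unfolding ee_def using j by simp
qed

lemma ee_ge: "ee (Suc n) \<ge> 3"
proof -
  obtain x where x: "x = (3::nat) ^ n" by simp
  have "x \<ge> 1" unfolding x by simp
  then have "3 \<le> (3 * x + 3) div 2" by presburger
  then show ?thesis unfolding ee_def x by simp
qed




lemma PP1: "z > 0 \<Longrightarrow> PP (Suc 0) z = z * (z + 1)"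
proof -
  assume z: "z > 0"
  have "z powr (3 / 2) = z powr (1 + 1/2)" by simp
  also have "\<dots> = z powr 1 * z powr (1/2)" by (rule powr_add)
  also have "\<dots> = z * sqrt z" using z by (simp add: powr_half_sqrt)
  finally have "z powr (3 / 2) = z * sqrt z" .
  then show ?thesis using z unfolding PP_def by (simp add: field_simps)
qed

lemma ch_th:
  fixes K :: real
  defines "u \<equiv> exp K"
  shows "cosh K = (u + 1 / u) / 2" "tanh K = (u - 1 / u) / (u + 1 / u)" "exp (- K) = 1 / u"
  unfolding u_def by (simp_all add: cosh_def tanh_altdef exp_minus field_simps)

lemma inv_AB:
  assumes K: "K > 0"
  shows "2 * (fst (AB K m) - snd (AB K m)) = 2 ^ ee (Suc m) * cosh K ^ (3 ^ Suc m) * PP (Suc m) (tanh K)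
       \<and> fst (AB K m) + 3 * snd (AB K m) = (fst (AB K m) - snd (AB K m)) * (phi (Suc m + 1) (tanh K) - 1)"
proof (induction m)
  case 0
  define u where "u = exp K"
  have u: "u > 0" unfolding u_def by simp
  have u1: "u > 1" unfolding u_def using K by simp
  have t: "tanh K > 0" using K by simp
  have e1: "ee (Suc 0) = 3" by (simp add: ee_def)
  have c: "cosh K = (u + 1 / u) / 2" "tanh K = (u - 1 / u) / (u + 1 / u)" "exp (- K) = 1 / u"
    using ch_th[of K] unfolding u_def by auto
  have AB0: "fst (AB K 0) = u ^ 3" "snd (AB K 0) = u * (1 / u) ^ 2" using c(3) by (simp_all add: u_def)
  have p1: "u + 1 / u > 0" using u by (intro add_pos_pos) simp_all
  have "1 < u * u" using u1 by (metis less_1_mult)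
  then have p2: "u - 1 / u > 0" using u1 u by (simp add: field_simps)
  have p3: "(u - 1 / u) / (u + 1 / u) > 0" using p1 p2 by simp
  define q where "q = u ^ 2 + 1"
  have q: "q > 0" unfolding q_def by (intro add_nonneg_pos) simp_all
  have pp: "1 + u * u > 0" "u + u * (u * u) > 0" "u * u + 1 > 0" using u by (simp_all add: add_pos_pos add_nonneg_pos)
  have cc: "(u + 1 / u) / 2 = q / (2 * u)" unfolding q_def using u pp by (simp add: field_simps power2_eq_square)
  have tt: "(u - 1 / u) / (u + 1 / u) = (u ^ 2 - 1) / q" unfolding q_def using u pp
    by (simp add: field_simps power2_eq_square)
  have tt1: "(u ^ 2 - 1) / q + 1 = 2 * u ^ 2 / q" using q unfolding q_def by (simp add: field_simps)
  have h1: "2 ^ 3 * (q / (2 * u)) ^ 3 * ((u ^ 2 - 1) / q * (2 * u ^ 2 / q)) = 2 * (u ^ 2 - 1) * q / u"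
    using u q by (simp add: field_simps power2_eq_square power3_eq_cube)
  have h2: "2 * (u ^ 3 - u * (1 / u) ^ 2) = 2 * (u ^ 2 - 1) * q / u"
    unfolding q_def using u by (simp add: field_simps power2_eq_square power3_eq_cube)
  have ph2: "(((u ^ 2 - 1) / q) ^ 2 + 1) / ((u ^ 2 - 1) / q) - 1 = ((u ^ 2 - 1) ^ 2 + q ^ 2 - (u ^ 2 - 1) * q) / ((u ^ 2 - 1) * q)"
    using q p2 u by (simp add: field_simps power2_eq_square)
  have u21: "u ^ 2 - 1 > 0" using \<open>1 < u * u\<close> by (simp add: power2_eq_square)
  have h2': "u ^ 3 - u * (1 / u) ^ 2 = (u ^ 2 - 1) * q / u" unfolding q_def using u by (simp add: field_simps power2_eq_square power3_eq_cube)
  have N: "(u ^ 2 - 1) ^ 2 + q ^ 2 - (u ^ 2 - 1) * q = u ^ 4 + 3"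
    unfolding q_def by (simp add: power2_eq_square algebra_simps) (simp add: power4_eq_xxxx)
  have h3': "(u ^ 2 - 1) * q / u * ((u ^ 4 + 3) / ((u ^ 2 - 1) * q)) = (u ^ 4 + 3) / u"
    using u u21 q by (simp add: field_simps)
  have h3'': "u ^ 3 + 3 * (u * (1 / u) ^ 2) = (u ^ 4 + 3) / u"
    using u by (simp add: field_simps power2_eq_square power3_eq_cube power4_eq_xxxx)
  have h3: "u ^ 3 + 3 * (u * (1 / u) ^ 2) = (u ^ 3 - u * (1 / u) ^ 2) *
      (((u ^ 2 - 1) ^ 2 + q ^ 2 - (u ^ 2 - 1) * q) / ((u ^ 2 - 1) * q))"
    unfolding h2' N h3'' h3' ..
  have T: "tanh K = (u ^ 2 - 1) / q" using c(2) tt by simp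
  have C: "cosh K = q / (2 * u)" using c(1) cc by simp
  have PPt: "PP (Suc 0) (tanh K) = (u ^ 2 - 1) / q * (2 * u ^ 2 / q)"
    using PP1[OF t] unfolding T tt1 .
  have conj1: "2 * (fst (AB K 0) - snd (AB K 0)) = 2 ^ ee (Suc 0) * cosh K ^ 3 ^ Suc 0 * PP (Suc 0) (tanh K)"
    unfolding PPt AB0 e1 C using h1 h2 by simp
  have conj2: "fst (AB K 0) + 3 * snd (AB K 0) = (fst (AB K 0) - snd (AB K 0)) * (phi (Suc 0 + 1) (tanh K) - 1)"
  proof -
    have "phi (Suc 0 + 1) (tanh K) = (tanh K ^ 2 + 1) / tanh K" by (simp add: numeral_2_eq_2)
    then show ?thesis unfolding AB0 T using h3 ph2 by simp
  qed
  show ?case using conj1 conj2 by blast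
next
  case (Suc m)
  obtain A B where ab: "AB K m = (A, B)" by (cases "AB K m") auto
  define D where "D = A - B"
  define ph where "ph = phi (Suc (Suc m)) (tanh K)"
  define c where "c = cosh K ^ (3 ^ Suc m)"
  define P where "P = PP (Suc m) (tanh K)"
  have t: "tanh K > 0" using K by simp
  have I1: "2 * D = 2 ^ ee (Suc m) * c * P" and I2: "A + 3 * B = D * (ph - 1)"
    using Suc.IH unfolding ab D_def ph_def c_def P_def fst_conv snd_conv by simp_all
  have AB': "fst (AB K (Suc m)) = A ^ 3 + 3 * A * B ^ 2 + 4 * B ^ 3"
      "snd (AB K (Suc m)) = A ^ 2 * B + 4 * A * B ^ 2 + 3 * B ^ 3" using ab by simp_all
  have ph': "phi (Suc (Suc m) + 1) (tanh K) = ph ^ 2 - 3 * ph + 4"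
    unfolding ph_def by simp
  have c': "cosh K ^ (3 ^ Suc (Suc m)) = c ^ 3"
    unfolding c_def by (simp add: power_mult[symmetric] mult.commute)
  have P': "PP (Suc (Suc m)) (tanh K) = P ^ 3 * ph"
    unfolding P_def ph_def using PP_Suc[OF t] by simp
  have e': "(2::real) ^ ee (Suc (Suc m)) * 8 = (2 ^ ee (Suc m)) ^ 3"
  proof -
    have "(2::real) ^ ee (Suc (Suc m)) * 8 = 2 ^ (ee (Suc (Suc m)) + 3)" by (simp add: power_add)
    also have "\<dots> = 2 ^ (3 * ee (Suc m))" using ee_Suc[of "Suc m"] by simp
    also have "\<dots> = (2 ^ ee (Suc m)) ^ 3" by (simp add: power_mult[symmetric] mult.commute)
    finally show ?thesis .
  qed
  have AB_sum: "A + B = D * ph / 2" using I2 unfolding D_def by (simp add: algebra_simps)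
  have Dp: "A ^ 3 + 3 * A * B ^ 2 + 4 * B ^ 3 - (A ^ 2 * B + 4 * A * B ^ 2 + 3 * B ^ 3) = D ^ 2 * (A + B)"
    unfolding D_def by (simp add: power2_eq_square power3_eq_cube algebra_simps)
  have Sp: "A ^ 3 + 3 * A * B ^ 2 + 4 * B ^ 3 + 3 * (A ^ 2 * B + 4 * A * B ^ 2 + 3 * B ^ 3)
      = (A + B) * ((A + 3 * B) ^ 2 - (A + 3 * B) * D + D ^ 2)"
    unfolding D_def by (simp add: power2_eq_square power3_eq_cube algebra_simps)
  show ?case
  proof
    have "2 * (D ^ 2 * (A + B)) = (2 * D) ^ 3 * ph / 8" unfolding AB_sum
      by (simp add: power3_eq_cube power2_eq_square)
    also have "\<dots> = (2 ^ ee (Suc m)) ^ 3 / 8 * c ^ 3 * P ^ 3 * ph"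
      unfolding I1 by (simp add: power_mult_distrib)
    also have "\<dots> = 2 ^ ee (Suc (Suc m)) * c ^ 3 * (P ^ 3 * ph)"
      unfolding e'[symmetric] by simp
    finally show "2 * (fst (AB K (Suc m)) - snd (AB K (Suc m))) = 2 ^ ee (Suc (Suc m)) *
        cosh K ^ 3 ^ Suc (Suc m) * PP (Suc (Suc m)) (tanh K)"
      unfolding AB' Dp c' P' .
  next
    have "(A + B) * ((A + 3 * B) ^ 2 - (A + 3 * B) * D + D ^ 2) = D ^ 2 * (A + B) * ((ph - 1) ^ 2 - (ph - 1) + 1)"
      unfolding I2 by (simp add: power2_eq_square algebra_simps)
    then show "fst (AB K (Suc m)) + 3 * snd (AB K (Suc m)) =
        (fst (AB K (Suc m)) - snd (AB K (Suc m))) * (phi (Suc (Suc m) + 1) (tanh K) - 1)"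
      unfolding AB' Dp Sp ph' by (simp add: power2_eq_square algebra_simps)
  qed
qed




theorem theorem3p12:
  fixes n :: nat and \<beta> J :: real
  assumes "n \<ge> 1" and "\<beta> > 0" and "J > 0"
  shows "2 * (exp (2 * \<beta> * J) - 1) ^ (card (sier_V n) - 1)
           * exp (- \<beta> * J * real (card (sier_E n)))
           * T_sier n ((exp (2 * \<beta> * J) + 1) / (exp (2 * \<beta> * J) - 1)) (exp (2 * \<beta> * J))
         = 2 ^ ((3 ^ n + 3) div 2) * cosh (\<beta> * J) ^ (3 ^ n) * Phi n (tanh (\<beta> * J))"
proof -
  obtain m where n: "n = Suc m" using assms(1) by (cases n) auto
  define K where "K = \<beta> * J"
  have K: "K > 0" unfolding K_def using assms by simp
  define w where "w = exp (2 * K) - 1"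
  have w: "w > 0" unfolding w_def using K by simp
  have e2: "exp (2 * \<beta> * J) = 1 + w" unfolding w_def K_def by (simp add: mult.assoc)
  have xx: "(exp (2 * \<beta> * J) + 1) / (exp (2 * \<beta> * J) - 1) = 1 + 2 / w"
    unfolding e2 using w by (simp add: field_simps)
  have ex: "exp (- \<beta> * J * real (card (EE m))) = exp (- K * real (card (EE m)))"
    unfolding K_def by simp
  have fV: "finite (VV m)" and fE: "finite (EE m)" using fin_VE by auto
  have S: "2 * w ^ (card (VV m) - 1) * T_sier (Suc m) (1 + 2 / w) (1 + w)
      = (\<Sum>\<sigma>\<in>Col (VV m). \<Prod>e\<in>EE m. (1 + (if cst \<sigma> e then w else 0)))"
    unfolding T_sier_def tutte_FK[OF fV fE edges_ok_EE ncomp1 w] FK_spin[OF fV fE edges_ok_EE] ..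
  have "exp (- K * real (card (EE m))) * (2 * w ^ (card (VV m) - 1) * T_sier (Suc m) (1 + 2 / w) (1 + w))
      = (\<Sum>\<sigma>\<in>Col (VV m). exp (- K * real (card (EE m))) * (\<Prod>e\<in>EE m. (1 + (if cst \<sigma> e then w else 0))))"
    unfolding S sum_distrib_left ..
  also have "\<dots> = (\<Sum>\<sigma>\<in>Col (VV m). W K m \<sigma>)"
    unfolding W_def w_def by (rule sum.cong[OF refl]) (rule weight[OF fE])
  also have "\<dots> = 2 * fst (AB K m) + 6 * snd (AB K m)" by (rule total)
  also have "\<dots> = 2 ^ ee (Suc m) * cosh K ^ (3 ^ Suc m) * Phi (Suc m) (tanh K)"
  proof -
    obtain I1 I2 where "2 * (fst (AB K m) - snd (AB K m)) = 2 ^ ee (Suc m) * cosh K ^ (3 ^ Suc m) * PP (Suc m) (tanh K)"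
      and "fst (AB K m) + 3 * snd (AB K m) = (fst (AB K m) - snd (AB K m)) * (phi (Suc m + 1) (tanh K) - 1)"
      using inv_AB[OF K, of m] by blast
    note h = this
    have "2 * fst (AB K m) + 6 * snd (AB K m) = 2 * (fst (AB K m) + 3 * snd (AB K m))" by simp
    also have "\<dots> = 2 * (fst (AB K m) - snd (AB K m)) * (phi (Suc m + 1) (tanh K) - 1)"
      unfolding h(2) by simp
    also have "\<dots> = 2 ^ ee (Suc m) * cosh K ^ (3 ^ Suc m) * (PP (Suc m) (tanh K) * (phi (Suc m + 1) (tanh K) - 1))"
      unfolding h(1) by simp
    finally show ?thesis unfolding Phi_PP .
  qed
  finally have F: "exp (- K * real (card (EE m))) * (2 * w ^ (card (VV m) - 1) * T_sier (Suc m) (1 + 2 / w) (1 + w))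
      = 2 ^ ee (Suc m) * cosh K ^ (3 ^ Suc m) * Phi (Suc m) (tanh K)" .
  have e3: "exp (2 * \<beta> * J) - 1 = w" unfolding e2 by simp
  show ?thesis unfolding n unfolding xx unfolding e3 unfolding e2 unfolding ex K_def[symmetric] using F unfolding ee_def by (simp only: mult_ac)
qed


end
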